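(* Let $r\geq 3$ and let $D$ be an $m$-colored semicomplete $r$-partite digraph such that every $\overrightarrow{C}_3$ and every $\overrightarrow{C}_4$ contained in $D$ is monochromatic. Then $D$ has a $2$-colored kernel.
   Context: A semicomplete $r$-partite digraph ($r\ge 2$) is a digraph whose vertex set is partitioned into $r$ nonempty independent sets (partite sets) such that for any two vertices $u,v$ in different partite sets at least one of the arcs $(u,v)$, $(v,u)$ is present (both may be present); there are no arcs inside a partite set. An $m$-colored digraph is a digraph whose arcs are each assigned one of $m$ colors. A directed path (no repeated vertices) is $j$-colored if its arcs use exactly $j$ distinct colors. "Contained in $D$" means being a subdigraph of $D$; a subdigraph is monochromatic if all its arcs have the same color. $\overrightarrow{C}_n$ is the directed cycle of length $n$. A $k$-colored kernel of $D$ is a nonempty set $K\subseteq V(D)$ such that (a) for every $u\in V(D)\setminus K$ there exist $v\in K$ and a $j$-colored directed path from $u$ to $v$ with $1\le j\le k$, and (b) for all distinct $u,v\in K$ there is no $j$-colored directed path from $u$ to $v$ with $1\le j\le k$. *)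

theory Defs
  imports Main
begin

definition digraph :: "'a set \<Rightarrow> ('a \<times> 'a) set \<Rightarrow> bool" where
  "digraph V A \<longleftrightarrow> finite V \<and> A \<subseteq> V \<times> V \<and> (\<forall>v. (v, v) \<notin> A)"

definition m_colored :: "('a \<times> 'a) set \<Rightarrow> nat \<Rightarrow> ('a \<times> 'a \<Rightarrow> nat) \<Rightarrow> bool" where
  "m_colored A m c \<longleftrightarrow> (\<forall>e\<in>A. c e < m)"

definition semicomplete_multipartite ::
  "'a set \<Rightarrow> ('a \<times> 'a) set \<Rightarrow> nat \<Rightarrow> 'a set set \<Rightarrow> bool" where
  "semicomplete_multipartite V A r P \<longleftrightarrow>
     finite P \<and> card P = r \<and> \<Union>P = V \<and> (\<forall>X\<in>P. X \<noteq> {}) \<and>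
     (\<forall>X\<in>P. \<forall>Y\<in>P. X \<noteq> Y \<longrightarrow> X \<inter> Y = {}) \<and>
     (\<forall>X\<in>P. \<forall>u\<in>X. \<forall>v\<in>X. (u, v) \<notin> A) \<and>
     (\<forall>X\<in>P. \<forall>Y\<in>P. X \<noteq> Y \<longrightarrow> (\<forall>u\<in>X. \<forall>v\<in>Y. (u, v) \<in> A \<or> (v, u) \<in> A))"

definition path_arcs :: "'a list \<Rightarrow> ('a \<times> 'a) set" where
  "path_arcs p = set (zip p (tl p))"

definition dipath :: "('a \<times> 'a) set \<Rightarrow> 'a list \<Rightarrow> 'a \<Rightarrow> 'a \<Rightarrow> bool" where
  "dipath A p u v \<longleftrightarrow> length p \<ge> 2 \<and> distinct p \<and> hd p = u \<and> last p = v \<and>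
     path_arcs p \<subseteq> A"

definition num_colors :: "('a \<times> 'a \<Rightarrow> nat) \<Rightarrow> 'a list \<Rightarrow> nat" where
  "num_colors c p = card (c ` path_arcs p)"

definition colored_reach ::
  "('a \<times> 'a) set \<Rightarrow> ('a \<times> 'a \<Rightarrow> nat) \<Rightarrow> nat \<Rightarrow> 'a \<Rightarrow> 'a \<Rightarrow> bool" where
  "colored_reach A c k u v \<longleftrightarrow>
     (\<exists>p. dipath A p u v \<and> 1 \<le> num_colors c p \<and> num_colors c p \<le> k)"

definition k_colored_kernel ::
  "'a set \<Rightarrow> ('a \<times> 'a) set \<Rightarrow> ('a \<times> 'a \<Rightarrow> nat) \<Rightarrow> nat \<Rightarrow> 'a set \<Rightarrow> bool" where
  "k_colored_kernel V A c k K \<longleftrightarrow>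
     K \<noteq> {} \<and> K \<subseteq> V \<and>
     (\<forall>u\<in>V - K. \<exists>v\<in>K. colored_reach A c k u v) \<and>
     (\<forall>u\<in>K. \<forall>v\<in>K. u \<noteq> v \<longrightarrow> \<not> colored_reach A c k u v)"

definition C3_monochromatic :: "('a \<times> 'a) set \<Rightarrow> ('a \<times> 'a \<Rightarrow> nat) \<Rightarrow> bool" where
  "C3_monochromatic A c \<longleftrightarrow>
     (\<forall>x0 x1 x2. distinct [x0, x1, x2] \<and>
        (x0, x1) \<in> A \<and> (x1, x2) \<in> A \<and> (x2, x0) \<in> A \<longrightarrow>
        c (x0, x1) = c (x1, x2) \<and> c (x1, x2) = c (x2, x0))"

definition C4_monochromatic :: "('a \<times> 'a) set \<Rightarrow> ('a \<times> 'a \<Rightarrow> nat) \<Rightarrow> bool" where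
  "C4_monochromatic A c \<longleftrightarrow>
     (\<forall>x0 x1 x2 x3. distinct [x0, x1, x2, x3] \<and>
        (x0, x1) \<in> A \<and> (x1, x2) \<in> A \<and> (x2, x3) \<in> A \<and> (x3, x0) \<in> A \<longrightarrow>
        c (x0, x1) = c (x1, x2) \<and> c (x1, x2) = c (x2, x3) \<and> c (x2, x3) = c (x3, x0))"

end

theory Submission
  imports Defs
begin

lemma sink_exists:
  assumes "finite S" "S \<noteq> {}" "\<And>a b c. T a b \<Longrightarrow> T b c \<Longrightarrow> T a c"
  shows "\<exists>v\<in>S. \<forall>w\<in>S. T v w \<longrightarrow> T w v"
  using assms(1,2)
proof (induction S rule: finite_ne_induct)
  case (singleton x)
  then show ?case by auto
next
  case (insert x F)
  then obtain v where v: "v\<in>F" "\<forall>w\<in>F. T v w \<longrightarrow> T w v" by auto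
  show ?case
  proof (cases "T v x \<and> \<not> T x v")
    case True
    have "\<forall>w\<in>insert x F. T x w \<longrightarrow> T w x"
      using True v assms(3) by blast
    then show ?thesis by blast
  next
    case False
    then show ?thesis using v by blast
  qed
qed

lemma kernel_trans:
  assumes "finite S" "S \<noteq> {}" "\<And>a b c. T a b \<Longrightarrow> T b c \<Longrightarrow> T a c"
  shows "\<exists>K. K \<noteq> {} \<and> K \<subseteq> S \<and> (\<forall>u\<in>S-K. \<exists>v\<in>K. T u v) \<and> (\<forall>u\<in>K. \<forall>v\<in>K. u\<noteq>v \<longrightarrow> \<not>T u v)"
  using assms(1,2)
proof (induction "card S" arbitrary: S rule: less_induct)
  case less
  have "\<exists>v\<in>S. \<forall>w\<in>S. T v w \<longrightarrow> T w v"
    by (rule sink_exists[of S T, OF less.prems(1,2)]) (fact assms(3))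
  then obtain v where v: "v\<in>S" "\<forall>w\<in>S. T v w \<longrightarrow> T w v" by blast
  define S' where "S' = {w\<in>S. w \<noteq> v \<and> \<not> T w v}"
  show ?case
  proof (cases "S' = {}")
    case True
    then have "\<forall>u\<in>S-{v}. T u v" by (auto simp: S'_def)
    then show ?thesis using v by (intro exI[of _ "{v}"]) auto
  next
    case False
    have sub: "S' \<subset> S" using v by (auto simp: S'_def)
    then have cl: "card S' < card S" using less.prems(1) psubset_card_mono by blast
    have fS: "finite S'" using sub less.prems(1) finite_subset by blast
    obtain K' where K': "K' \<noteq> {}" "K' \<subseteq> S'" "\<forall>u\<in>S'-K'. \<exists>v\<in>K'. T u v"
      "\<forall>u\<in>K'. \<forall>v\<in>K'. u\<noteq>v \<longrightarrow> \<not>T u v"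
      using less.hyps[OF cl fS False] by (elim exE conjE)
    have KS: "insert v K' \<subseteq> S" using K'(2) sub v(1) by blast
    have abs: "\<forall>u\<in>S - insert v K'. \<exists>w\<in>insert v K'. T u w"
    proof
      fix u assume u: "u \<in> S - insert v K'"
      show "\<exists>w\<in>insert v K'. T u w"
      proof (cases "u \<in> S'")
        case True then show ?thesis using K'(3) u by blast
      next
        case False then have "T u v" using u unfolding S'_def by blast
        then show ?thesis by blast
      qed
    qed
    have ind: "\<forall>x\<in>insert v K'. \<forall>y\<in>insert v K'. x\<noteq>y \<longrightarrow> \<not>T x y"
    proof (intro ballI impI)
      fix x y assume x: "x \<in> insert v K'" and y: "y \<in> insert v K'" and xy: "x \<noteq> y"
      have kS': "\<And>k. k \<in> K' \<Longrightarrow> k \<in> S \<and> k \<noteq> v \<and> \<not> T k v" using K'(2) unfolding S'_def by blast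
      show "\<not> T x y"
      proof (cases "x = v")
        case True
        then have "y \<in> K'" using y xy by blast
        then show ?thesis using kS' v(2) True by blast
      next
        case False
        then have xK: "x \<in> K'" using x by blast
        show ?thesis
        proof (cases "y = v")
          case True then show ?thesis using kS' xK by blast
        next
          case False then have "y \<in> K'" using y by blast
          then show ?thesis using K'(4) xK xy by blast
        qed
      qed
    qed
    show ?thesis by (intro exI[of _ "insert v K'"] conjI insert_not_empty KS abs ind)
  qed
qed

definition walk :: "('a \<times> 'a) set \<Rightarrow> nat \<Rightarrow> (nat \<Rightarrow> 'a) \<Rightarrow> 'a \<Rightarrow> 'a \<Rightarrow> bool" where
  "walk A n f u v \<longleftrightarrow> f 0 = u \<and> f n = v \<and> (\<forall>i<n. (f i, f (Suc i)) \<in> A)"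

lemma trancl_walk: "(u,v) \<in> A\<^sup>+ \<Longrightarrow> \<exists>n f. n \<ge> 1 \<and> walk A n f u v"
proof (induction rule: trancl_induct)
  case (base y)
  show ?case
    by (rule exI[of _ 1], rule exI[of _ "\<lambda>k. if k=0 then u else y"]) (auto simp: walk_def base)
next
  case (step y z)
  then obtain n f where nf: "n \<ge> 1" "walk A n f u y" by blast
  have "walk A (Suc n) (f(Suc n := z)) u z"
    using nf step(2) unfolding walk_def by (auto simp: less_Suc_eq)
  then show ?case by (intro exI[of _ "Suc n"]) auto
qed

lemma shortcut_arc:
  assumes "walk A n f u v" "i < j" "j \<le> n" "(f i, f j) \<in> A"
  shows "walk A (n + i + 1 - j) (\<lambda>k. if k \<le> i then f k else f (k + j - i - 1)) u v"
  unfolding walk_def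
proof (intro conjI allI impI)
  show "(if 0 \<le> i then f 0 else f (0 + j - i - 1)) = u" using assms(1) by (simp add: walk_def)
  show "(if n + i + 1 - j \<le> i then f (n + i + 1 - j) else f (n + i + 1 - j + j - i - 1)) = v"
  proof -
    have "\<not> (n + i + 1 - j \<le> i)" using assms by linarith
    moreover have "n + i + 1 - j + j - i - 1 = n" using assms by linarith
    ultimately show ?thesis using assms(1) by (simp add: walk_def)
  qed
  fix k assume k: "k < n + i + 1 - j"
  consider "k < i" | "k = i" | "k > i" by linarith
  then show "(if k \<le> i then f k else f (k + j - i - 1), if Suc k \<le> i then f (Suc k) else f (Suc k + j - i - 1)) \<in> A"
  proof cases
    case 1 then show ?thesis using assms(1,2,3) by (auto simp: walk_def)
  next
    case 2 then show ?thesis using assms(4) by auto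
  next
    case 3
    have "k + j - i - 1 < n" using k 3 assms by linarith
    moreover have "Suc k + j - i - 1 = Suc (k + j - i - 1)" using 3 assms by linarith
    ultimately show ?thesis using 3 assms(1) by (auto simp: walk_def)
  qed
qed

lemma shortcut_eq:
  assumes "walk A n f u v" "i < j" "j \<le> n" "f i = f j"
  shows "walk A (n + i - j) (\<lambda>k. if k \<le> i then f k else f (k + j - i)) u v"
  unfolding walk_def
proof (intro conjI allI impI)
  show "(if 0 \<le> i then f 0 else f (0 + j - i)) = u" using assms(1) by (simp add: walk_def)
  show "(if n + i - j \<le> i then f (n + i - j) else f (n + i - j + j - i)) = v"
  proof (cases "n + i - j \<le> i")
    case True
    then have "j = n" using assms by linarith
    then show ?thesis using assms True by (simp add: walk_def)
  next
    case False
    then show ?thesis using assms by (simp add: walk_def)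
  qed
  fix k assume k: "k < n + i - j"
  consider "k < i" | "k = i" | "k > i" by linarith
  then show "(if k \<le> i then f k else f (k + j - i), if Suc k \<le> i then f (Suc k) else f (Suc k + j - i)) \<in> A"
  proof cases
    case 1 then show ?thesis using assms(1,2,3) by (auto simp: walk_def)
  next
    case 2
    have "j < n" using k 2 by linarith
    moreover have "Suc k + j - i = Suc j" using 2 assms by linarith
    ultimately show ?thesis using 2 assms(1,4) by (auto simp: walk_def)
  next
    case 3
    have "k + j - i < n" using k 3 assms by linarith
    moreover have "Suc k + j - i = Suc (k + j - i)" using 3 assms by linarith
    ultimately show ?thesis using 3 assms(1) by (auto simp: walk_def)
  qed
qed


lemma reach_2col:
  fixes sp :: "'a \<Rightarrow> 'a \<Rightarrow> bool"
  assumes AV: "A \<subseteq> V \<times> V"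
    and arc_sp: "\<And>x y. (x,y) \<in> A \<Longrightarrow> \<not> sp x y"
    and sp_sym: "\<And>x y. sp x y \<Longrightarrow> sp y x"
    and sp_trans: "\<And>x y z. sp x y \<Longrightarrow> sp y z \<Longrightarrow> sp x z"
    and tot: "\<And>x y. x \<in> V \<Longrightarrow> y \<in> V \<Longrightarrow> \<not> sp x y \<Longrightarrow> (x,y) \<in> A \<or> (y,x) \<in> A"
    and C3: "C3_monochromatic A c" and C4: "C4_monochromatic A c"
    and uv: "(u,v) \<in> A\<^sup>+" "u \<noteq> v"
  shows "colored_reach A c 2 u v"
proof -
  define P where "P n \<longleftrightarrow> n \<ge> 1 \<and> (\<exists>f. walk A n f u v)" for n
  have "\<exists>n. P n" using trancl_walk[OF uv(1)] unfolding P_def by blast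
  then obtain n where Pn: "P n" and min: "\<And>m. m < n \<Longrightarrow> \<not> P m"
    using exists_least_iff[of P] by blast
  then obtain f where n1: "n \<ge> 1" and w: "walk A n f u v" unfolding P_def by blast
  have arcs: "\<And>i. i < n \<Longrightarrow> (f i, f (Suc i)) \<in> A" using w by (simp add: walk_def)
  have f0: "f 0 = u" and fn: "f n = v" using w by (simp_all add: walk_def)
  have inj: "f i \<noteq> f j" if "i < j" "j \<le> n" for i j
  proof
    assume eq: "f i = f j"
    note w' = shortcut_eq[OF w that eq]
    have "n + i - j \<ge> 1"
    proof (rule ccontr)
      assume "\<not> ?thesis" then have "i = 0" "j = n" using that by linarith+
      then show False using eq f0 fn uv(2) by simp
    qed
    then have "P (n+i-j)" using w' unfolding P_def by blast
    moreover have "n + i - j < n" using that by linarith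
    ultimately show False using min by blast
  qed
  have nochord: "(f i, f j) \<notin> A" if "i + 2 \<le> j" "j \<le> n" for i j
  proof
    assume a: "(f i, f j) \<in> A"
    have ij: "i < j" using that by linarith
    note w' = shortcut_arc[OF w ij that(2) a]
    have "P (n + i + 1 - j)" using w' that unfolding P_def by auto
    moreover have "n + i + 1 - j < n" using that by linarith
    ultimately show False using min by blast
  qed
  have inV: "f i \<in> V" if "i \<le> n" for i
  proof (cases "i < n")
    case True then show ?thesis using arcs[OF True] AV by blast
  next
    case False then have "i = Suc (n-1)" using that n1 by linarith
    moreover have "(f (n-1), f (Suc (n-1))) \<in> A" using arcs[of "n-1"] n1 by simp
    ultimately show ?thesis using AV by blast
  qed
  have step: "c (f i, f (Suc i)) = c (f (Suc i), f (Suc (Suc i)))" if "Suc (Suc i) \<le> n" "n \<ge> 3" for i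
  proof -
    define a where "a = f i"
    define b where "b = f (Suc i)"
    define d where "d = f (Suc (Suc i))"
    have ab: "(a,b)\<in>A" "(b,d)\<in>A" using arcs that unfolding a_def b_def d_def by auto
    have dab: "a\<noteq>b" "b\<noteq>d" "a\<noteq>d" using inj that by (auto simp: a_def b_def d_def)
    show ?thesis
    proof (cases "sp a d")
      case False
      have "(a,d) \<notin> A" using nochord[of i "Suc (Suc i)"] that by (simp add: a_def d_def)
      then have "(d,a) \<in> A" using tot[of a d] inV that False by (auto simp: a_def d_def)
      then have "c (a,b) = c (b,d)" using C3[unfolded C3_monochromatic_def, rule_format, of a b d] ab dab by simp
      then show ?thesis by (simp add: a_def b_def d_def)
    next
      case True
      show ?thesis
      proof (cases "Suc (Suc (Suc i)) \<le> n")
        case True2: True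
        define e where "e = f (Suc (Suc (Suc i)))"
        have de: "(d,e) \<in> A" using arcs True2 by (simp add: d_def e_def)
        have "\<not> sp a e" using arc_sp[OF de] sp_trans[OF sp_sym[OF True]] by blast
        moreover have "(a,e) \<notin> A" using nochord[of i "Suc(Suc(Suc i))"] True2 by (simp add: a_def e_def)
        ultimately have ea: "(e,a) \<in> A" using tot[of a e] inV True2 by (auto simp: a_def e_def)
        have "distinct [a,b,d,e]" using inj True2 by (auto simp: a_def b_def d_def e_def)
        then have "c (a,b) = c (b,d)" using C4[unfolded C4_monochromatic_def, rule_format, of a b d e] ab de ea by simp
        then show ?thesis by (simp add: a_def b_def d_def)
      next
        case False
        then have i1: "i \<ge> 1" using that by linarith
        define z where "z = f (i - 1)"
        have si: "Suc (i - 1) = i" using i1 by simp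
        have za: "(z,a) \<in> A" using arcs[of "i-1"] i1 that si by (simp add: z_def a_def)
        have "\<not> sp z d" using arc_sp[OF za] sp_trans[OF _ sp_sym[OF True]] by blast
        moreover have "(z,d) \<notin> A" using nochord[of "i-1" "Suc (Suc i)"] that i1 by (simp add: z_def d_def)
        ultimately have dz: "(d,z) \<in> A" using tot[of z d] inV that by (auto simp: z_def d_def)
        have "distinct [z,a,b,d]" using inj that i1 by (auto simp: z_def a_def b_def d_def)
        then have "c (a,b) = c (b,d)" using C4[unfolded C4_monochromatic_def, rule_format, of z a b d] za ab dz by simp
        then show ?thesis by (simp add: a_def b_def d_def)
      qed
    qed
  qed
  have allc: "c (f i, f (Suc i)) = c (f 0, f 1)" if "i < n" "n \<ge> 3" for i
    using that
  proof (induction i)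
    case 0 then show ?case by simp
  next
    case (Suc i)
    then have "c (f i, f (Suc i)) = c (f 0, f 1)" by simp
    with step[of i] Suc.prems show ?case by simp
  qed
  define p where "p = map f [0..<Suc n]"
  have pa: "path_arcs p = (\<lambda>i. (f i, f (Suc i))) ` {..<n}"
  proof -
    have len: "length p = Suc n" "length (tl p) = n" by (simp_all add: p_def)
    have nth: "p ! i = f i \<and> tl p ! i = f (Suc i)" if "i < n" for i
      using that by (simp add: p_def nth_tl del: upt_Suc)
    show ?thesis unfolding path_arcs_def set_zip len using nth by (auto simp: image_def) (metis nth)
  qed
  have dp: "dipath A p u v"
    unfolding dipath_def
  proof (intro conjI)
    show "2 \<le> length p" using n1 by (simp add: p_def)
    have io: "inj_on f {0..<Suc n}"
    proof (rule inj_onI)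
      fix x y assume xy: "x \<in> {0..<Suc n}" "y \<in> {0..<Suc n}" "f x = f y"
      show "x = y"
      proof (rule ccontr)
        assume "x \<noteq> y"
        then consider "x < y" | "y < x" by linarith
        then show False using inj xy by cases (auto, metis less_Suc_eq_le)
      qed
    qed
    then show "distinct p" unfolding p_def distinct_map set_upt by (simp del: upt_Suc)
    show "hd p = u" using f0 by (simp add: p_def hd_map del: upt_Suc)
    show "last p = v" using fn by (simp add: p_def last_map)
    show "path_arcs p \<subseteq> A" using pa arcs by auto
  qed
  have cimg: "c ` path_arcs p = (\<lambda>i. c (f i, f (Suc i))) ` {..<n}"
    unfolding pa image_image by (rule refl)
  have "1 \<le> num_colors c p"
    unfolding num_colors_def cimg using n1 by (simp add: Suc_le_eq card_gt_0_iff lessThan_empty_iff)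
  have c1: "1 \<le> num_colors c p" by fact
  have c2: "num_colors c p \<le> 2"
  proof (cases "n \<ge> 3")
    case True
    then have "(\<lambda>i. c (f i, f (Suc i))) ` {..<n} \<subseteq> {c (f 0, f 1)}" using allc[OF _ True] by blast
    then have "card ((\<lambda>i. c (f i, f (Suc i))) ` {..<n}) \<le> 1"
      using card_mono[of "{c (f 0, f 1)}"] by simp
    then show ?thesis unfolding num_colors_def cimg by simp
  next
    case False
    have "card ((\<lambda>i. c (f i, f (Suc i))) ` {..<n}) \<le> card {..<n}" by (rule card_image_le) simp
    then show ?thesis unfolding num_colors_def cimg using False by simp
  qed
  show ?thesis unfolding colored_reach_def by (intro exI[of _ p] conjI dp c1 c2)
qed


lemma path_trancl: "length p \<ge> 2 \<Longrightarrow> path_arcs p \<subseteq> A \<Longrightarrow> (hd p, last p) \<in> A\<^sup>+"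
proof (induction p)
  case Nil then show ?case by simp
next
  case (Cons x xs)
  then obtain y ys where xs: "xs = y # ys" by (cases xs) auto
  have xy: "(x,y) \<in> A" using Cons.prems xs by (auto simp: path_arcs_def)
  show ?case
  proof (cases ys)
    case Nil then show ?thesis using xy xs by auto
  next
    case (Cons z zs)
    have "path_arcs xs \<subseteq> A" using Cons.prems xs by (auto simp: path_arcs_def)
    then have "(hd xs, last xs) \<in> A\<^sup>+" using Cons.IH xs Cons by simp
    then show ?thesis using xy xs Cons by simp
  qed
qed

lemma colored_reach_trancl:
  assumes "colored_reach A c k u v" shows "(u,v) \<in> A\<^sup>+" "u \<noteq> v"
proof -
  obtain p where p: "dipath A p u v" using assms unfolding colored_reach_def by blast
  then show "(u,v) \<in> A\<^sup>+" using path_trancl unfolding dipath_def by blast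
  from p have "length p \<ge> 2" "distinct p" "hd p = u" "last p = v" unfolding dipath_def by auto
  then show "u \<noteq> v"
  proof (cases p)
    case Nil then show ?thesis using \<open>length p \<ge> 2\<close> by simp
  next
    case (Cons x xs)
    then have "xs \<noteq> []" using \<open>length p \<ge> 2\<close> by auto
    then have "last p \<in> set xs" using Cons by simp
    moreover have "x \<notin> set xs" using \<open>distinct p\<close> Cons by simp
    ultimately show ?thesis using \<open>hd p = u\<close> \<open>last p = v\<close> Cons by auto
  qed
qed

theorem mainTheorem8:
  fixes V :: "'a set" and A :: "('a \<times> 'a) set" and c :: "'a \<times> 'a \<Rightarrow> nat"
    and m r :: nat and P :: "'a set set"
  assumes "r \<ge> 3"
    and "digraph V A"
    and "m_colored A m c"
    and "semicomplete_multipartite V A r P"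
    and "C3_monochromatic A c"
    and "C4_monochromatic A c"
  shows "\<exists>K. k_colored_kernel V A c 2 K"
proof -
  have UnP: "\<Union>P = V" and cardP: "card P = r" and finP: "finite P"
    and neP: "\<forall>X\<in>P. X \<noteq> {}"
    and disj: "\<forall>X\<in>P. \<forall>Y\<in>P. X \<noteq> Y \<longrightarrow> X \<inter> Y = {}"
    and indep: "\<forall>X\<in>P. \<forall>u\<in>X. \<forall>v\<in>X. (u, v) \<notin> A"
    and semi: "\<forall>X\<in>P. \<forall>Y\<in>P. X \<noteq> Y \<longrightarrow> (\<forall>u\<in>X. \<forall>v\<in>Y. (u, v) \<in> A \<or> (v, u) \<in> A)"
    using assms(4) unfolding semicomplete_multipartite_def by simp_all
  have finV: "finite V" and AV: "A \<subseteq> V \<times> V" using assms(2) unfolding digraph_def by blast+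
  define sp where "sp x y \<longleftrightarrow> (\<exists>X\<in>P. x \<in> X \<and> y \<in> X)" for x y
  have arc_sp: "\<And>x y. (x,y) \<in> A \<Longrightarrow> \<not> sp x y" using indep unfolding sp_def by blast
  have sp_sym: "\<And>x y. sp x y \<Longrightarrow> sp y x" unfolding sp_def by blast
  have sp_trans: "\<And>x y z. sp x y \<Longrightarrow> sp y z \<Longrightarrow> sp x z"
  proof -
    fix x y z assume "sp x y" "sp y z"
    then obtain X Y where "X \<in> P" "Y \<in> P" "x \<in> X" "y \<in> X" "y \<in> Y" "z \<in> Y" unfolding sp_def by blast
    moreover then have "X = Y" using disj by blast
    ultimately show "sp x z" unfolding sp_def by blast
  qed
  have tot: "\<And>x y. x \<in> V \<Longrightarrow> y \<in> V \<Longrightarrow> \<not> sp x y \<Longrightarrow> (x,y) \<in> A \<or> (y,x) \<in> A"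
  proof -
    fix x y assume "x \<in> V" "y \<in> V" "\<not> sp x y"
    then obtain X Y where "X \<in> P" "Y \<in> P" "x \<in> X" "y \<in> Y" "X \<noteq> Y" using UnP unfolding sp_def by blast
    then show "(x,y) \<in> A \<or> (y,x) \<in> A" using semi by blast
  qed
  have "P \<noteq> {}" using cardP assms(1) by auto
  then have Vne: "V \<noteq> {}" using neP UnP by blast
  have "\<exists>K. K \<noteq> {} \<and> K \<subseteq> V \<and> (\<forall>u\<in>V-K. \<exists>v\<in>K. (u,v) \<in> A\<^sup>+) \<and>
    (\<forall>u\<in>K. \<forall>v\<in>K. u\<noteq>v \<longrightarrow> \<not> (u,v) \<in> A\<^sup>+)"
    by (rule kernel_trans) (fact finV, fact Vne, erule (1) trancl_trans)
  then obtain K where K: "K \<noteq> {}" "K \<subseteq> V" "\<forall>u\<in>V-K. \<exists>v\<in>K. (u,v) \<in> A\<^sup>+"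
    "\<forall>u\<in>K. \<forall>v\<in>K. u\<noteq>v \<longrightarrow> \<not> (u,v) \<in> A\<^sup>+"
    by (elim exE conjE) (rule that)
  have "k_colored_kernel V A c 2 K"
    unfolding k_colored_kernel_def
  proof (intro conjI)
    show "K \<noteq> {}" "K \<subseteq> V" using K by auto
    show "\<forall>u\<in>V - K. \<exists>v\<in>K. colored_reach A c 2 u v"
    proof
      fix u assume u: "u \<in> V - K"
      then obtain v where v: "v \<in> K" "(u,v) \<in> A\<^sup>+" using K by blast
      have "u \<noteq> v" using u v by blast
      have "colored_reach A c 2 u v"
        by (rule reach_2col[where sp=sp and V=V], fact AV, fact arc_sp, fact sp_sym, fact sp_trans,
            fact tot, fact assms(5), fact assms(6), fact v(2), fact \<open>u \<noteq> v\<close>)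
      then show "\<exists>v\<in>K. colored_reach A c 2 u v" using v by blast
    qed
    show "\<forall>u\<in>K. \<forall>v\<in>K. u \<noteq> v \<longrightarrow> \<not> colored_reach A c 2 u v"
      using K(4) colored_reach_trancl(1)[of A c 2] by blast
  qed
  then show ?thesis by blast
qed

end
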